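(* Let $\varphi$ be a finite conjunction of literals of the two forms $x\in y$ and $x = y\setminus z$ (with $x,y,z$ set variables), with finite set of variables $\mathrm{Vars}(\varphi)$, and let $\bar n=|\mathrm{Vars}(\varphi)|$. Let $M$ be a set assignment over $\mathrm{Vars}(\varphi)$ satisfying $\varphi$; let $\bar x,\bar y\in\mathrm{Vars}(\varphi)$, let $\overline{M}$ be a set assignment over $\mathrm{Vars}(\varphi)$ satisfying $\varphi$ with $\overline{M}\bar x\neq \overline{M}\bar y$, and let $\mathfrak{t}$ be a set belonging to exactly one of $\overline{M}\bar x$, $\overline{M}\bar y$. Fix a set $\mathfrak{s}$ with $\mathrm{rk}(\mathfrak{s})>\mathrm{rk}(M)$. Define $\mathsf{V}_0=\{u\in\mathrm{Vars}(\varphi)\mid \mathfrak{t}\in\overline{M}u\}$; $\mathsf{V}_n=\{u\in\mathrm{Vars}(\varphi)\mid Mu\cap\{Mw\mid w\in\mathsf{V}_{n-1}\}\neq\emptyset\}$ for $n\ge1$; $M_0v=Mv\cup\{\mathfrak{s}\}$ if $v\in\mathsf{V}_0$ and $M_0v=Mv$ otherwise; for $n\ge1$, $M_nv=M_{n-1}v\cup\{M_{n-1}u\mid u\in\mathsf{V}_{n-1},\ Mu\in Mv\}$ if $v\in\mathsf{V}_n$ and $M_nv=M_{n-1}v$ otherwise. Then $M_{\bar n}\bar x\neq M_{\bar n}\bar y$.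
   Context: A set assignment is a map from a finite set of set variables into the von Neumann universe $\mathcal{V}=\bigcup_\alpha\mathcal{V}_\alpha$, $\mathcal{V}_\alpha=\bigcup_{\beta<\alpha}\mathcal{P}(\mathcal{V}_\beta)$; it satisfies $x\in y$ iff $Mx\in My$ and $x=y\setminus z$ iff $Mx=My\setminus Mz$. The rank $\mathrm{rk}(s)$ of a set $s$ is the least ordinal $\alpha$ with $s\subseteq\mathcal{V}_\alpha$, and $\mathrm{rk}(M)=\max\{\mathrm{rk}(Mx)\mid x\in\mathrm{dom}(M)\}$. *)

theory Defs
  imports Main
begin

text \<open>A universe of well-founded sets is modelled abstractly by a carrier type 'v with an
  element map elts (x \<in> y is read as x \<in> elts y).  The von Neumann universe is an instance.\<close>

definition set_universe :: "('v \<Rightarrow> 'v set) \<Rightarrow> bool" where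
  "set_universe elts \<longleftrightarrow>
     inj elts \<and> wf {(x, y). x \<in> elts y} \<and>
     (\<forall>x F. finite F \<longrightarrow> (\<exists>y. elts y = elts x \<union> F))"

definition mkset :: "('v \<Rightarrow> 'v set) \<Rightarrow> 'v set \<Rightarrow> 'v" where
  "mkset elts A = (SOME y. elts y = A)"

text \<open>Rank comparison rk a \<le> rk b, by well-founded recursion on a:
  rk a \<le> rk b iff every element of a has rank \<le> some element of b
  (since rk a = sup of (rk x + 1) over elements x of a).\<close>
definition rk_le :: "('v \<Rightarrow> 'v set) \<Rightarrow> 'v \<Rightarrow> 'v \<Rightarrow> bool" where
  "rk_le elts = wfrec {(x, y). x \<in> elts y} (\<lambda>f a b. \<forall>x\<in>elts a. \<exists>y\<in>elts b. f x y)"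

definition rk_lt :: "('v \<Rightarrow> 'v set) \<Rightarrow> 'v \<Rightarrow> 'v \<Rightarrow> bool" where
  "rk_lt elts a b \<longleftrightarrow> rk_le elts a b \<and> \<not> rk_le elts b a"

datatype 'x literal = Mem 'x 'x | Diff 'x 'x 'x

fun lit_vars :: "'x literal \<Rightarrow> 'x set" where
  "lit_vars (Mem x y) = {x, y}"
| "lit_vars (Diff x y z) = {x, y, z}"

definition Vars :: "'x literal list \<Rightarrow> 'x set" where
  "Vars \<phi> = (\<Union>l\<in>set \<phi>. lit_vars l)"

fun lit_holds :: "('v \<Rightarrow> 'v set) \<Rightarrow> ('x \<Rightarrow> 'v) \<Rightarrow> 'x literal \<Rightarrow> bool" where
  "lit_holds elts M (Mem x y) \<longleftrightarrow> M x \<in> elts (M y)"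
| "lit_holds elts M (Diff x y z) \<longleftrightarrow> elts (M x) = elts (M y) - elts (M z)"

definition satisfies :: "('v \<Rightarrow> 'v set) \<Rightarrow> ('x \<Rightarrow> 'v) \<Rightarrow> 'x literal list \<Rightarrow> bool" where
  "satisfies elts M \<phi> \<longleftrightarrow> (\<forall>l\<in>set \<phi>. lit_holds elts M l)"

primrec Vseq :: "('v \<Rightarrow> 'v set) \<Rightarrow> 'x literal list \<Rightarrow> ('x \<Rightarrow> 'v) \<Rightarrow> ('x \<Rightarrow> 'v) \<Rightarrow> 'v
                 \<Rightarrow> nat \<Rightarrow> 'x set" where
  "Vseq elts \<phi> M Mb t 0 = {u \<in> Vars \<phi>. t \<in> elts (Mb u)}"
| "Vseq elts \<phi> M Mb t (Suc n) =
     {u \<in> Vars \<phi>. elts (M u) \<inter> {M w | w. w \<in> Vseq elts \<phi> M Mb t n} \<noteq> {}}"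

primrec Mseq :: "('v \<Rightarrow> 'v set) \<Rightarrow> 'x literal list \<Rightarrow> ('x \<Rightarrow> 'v) \<Rightarrow> ('x \<Rightarrow> 'v) \<Rightarrow> 'v \<Rightarrow> 'v
                 \<Rightarrow> nat \<Rightarrow> 'x \<Rightarrow> 'v" where
  "Mseq elts \<phi> M Mb t s 0 = (\<lambda>v. if v \<in> Vseq elts \<phi> M Mb t 0
       then mkset elts (elts (M v) \<union> {s}) else M v)"
| "Mseq elts \<phi> M Mb t s (Suc n) = (\<lambda>v. if v \<in> Vseq elts \<phi> M Mb t (Suc n)
       then mkset elts (elts (Mseq elts \<phi> M Mb t s n v) \<union>
              {Mseq elts \<phi> M Mb t s n u | u. u \<in> Vseq elts \<phi> M Mb t n \<and> M u \<in> elts (M v)})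
       else Mseq elts \<phi> M Mb t s n v)"

end

theory Submission
  imports Defs
begin

lemma rk_le_unfold:
  assumes "wf {(x, y). x \<in> elts y}"
  shows "rk_le elts a b = (\<forall>x\<in>elts a. \<exists>y\<in>elts b. rk_le elts x y)"
  unfolding rk_le_def
  by (subst wfrec[OF assms]) (simp add: cut_apply)

lemma rk_le_refl:
  assumes w: "wf {(x, y). x \<in> elts y}"
  shows "rk_le elts a a"
proof (induction a rule: wf_induct[OF w])
  case (1 a)
  have "\<forall>x\<in>elts a. \<exists>y\<in>elts a. rk_le elts x y"
  proof
    fix x assume x: "x \<in> elts a"
    then have "rk_le elts x x" using 1 by simp
    then show "\<exists>y\<in>elts a. rk_le elts x y" by (rule bexI[OF _ x])
  qed
  then show ?case using rk_le_unfold[OF w, of a a] by simp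
qed

lemma rk_le_mem:
  assumes w: "wf {(x, y). x \<in> elts y}"
  shows "x \<in> elts b \<Longrightarrow> rk_le elts x b"
proof (induction x arbitrary: b rule: wf_induct[OF w])
  case (1 x)
  have "\<forall>z\<in>elts x. \<exists>y\<in>elts b. rk_le elts z y"
  proof
    fix z assume z: "z \<in> elts x"
    have "rk_le elts z x" using 1(1) z by simp
    then show "\<exists>y\<in>elts b. rk_le elts z y" by (rule bexI[OF _ 1(2)])
  qed
  then show ?case using rk_le_unfold[OF w, of x b] by simp
qed

lemma finite_Vars: "finite (Vars \<phi>)"
proof -
  have "finite (lit_vars l)" for l :: "'x literal" by (cases l) auto
  then show ?thesis unfolding Vars_def by auto
qed

lemma mkset_elts:
  assumes "set_universe elts" "finite F"
  shows "elts (mkset elts (elts x \<union> F)) = elts x \<union> F"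
proof -
  from assms obtain y where "elts y = elts x \<union> F" unfolding set_universe_def by blast
  then show ?thesis unfolding mkset_def by (rule someI)
qed

lemma mkset_same:
  assumes "set_universe elts"
  shows "mkset elts (elts x) = x"
proof -
  have "elts (mkset elts (elts x \<union> {})) = elts x" using mkset_elts[OF assms, of "{}" x] by simp
  then show ?thesis using assms unfolding set_universe_def by (simp add: inj_eq)
qed

lemma Vseq_sub: "Vseq elts \<phi> M Mb t n \<subseteq> Vars \<phi>"
  by (cases n) auto

lemma finF: "finite {f u | u. u \<in> Vseq elts \<phi> M Mb t n \<and> P u}"
proof -
  have "{f u | u. u \<in> Vseq elts \<phi> M Mb t n \<and> P u} \<subseteq> f ` Vars \<phi>"
    using Vseq_sub[of elts \<phi> M Mb t n] by blast
  then show ?thesis using finite_subset finite_Vars by blast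
qed

lemma Mseq_Suc_elts:
  assumes "set_universe elts"
  shows "elts (Mseq elts \<phi> M Mb t s (Suc n) v) =
    (if v \<in> Vseq elts \<phi> M Mb t (Suc n) then elts (Mseq elts \<phi> M Mb t s n v) \<union>
              {Mseq elts \<phi> M Mb t s n u | u. u \<in> Vseq elts \<phi> M Mb t n \<and> M u \<in> elts (M v)}
     else elts (Mseq elts \<phi> M Mb t s n v))"
  using mkset_elts[OF assms finF[of "Mseq elts \<phi> M Mb t s n" elts \<phi> M Mb t n "\<lambda>u. M u \<in> elts (M v)"],
      of "Mseq elts \<phi> M Mb t s n v"]
  by (simp only: Mseq.simps(2)) simp

lemma mono_step:
  assumes "set_universe elts"
  shows "elts (Mseq elts \<phi> M Mb t s n v) \<subseteq> elts (Mseq elts \<phi> M Mb t s (Suc n) v)"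
  using Mseq_Suc_elts[OF assms, of \<phi> M Mb t s n v] by (auto simp del: Mseq.simps)

lemma mono_le:
  assumes "set_universe elts"
  shows "elts (Mseq elts \<phi> M Mb t s n v) \<subseteq> elts (Mseq elts \<phi> M Mb t s (n + k) v)"
proof (induction k)
  case (Suc k)
  then show ?case using mono_step[OF assms, of \<phi> M Mb t s "n+k" v] by (simp del: Mseq.simps)
qed simp

lemma invariant:
  assumes univ: "set_universe elts"
  shows "Mseq elts \<phi> M Mb t s n v = M v \<or>
         (s, Mseq elts \<phi> M Mb t s n v) \<in> {(x, y). x \<in> elts y}\<^sup>+"
proof (induction n arbitrary: v)
  case 0
  show ?case
  proof (cases "v \<in> Vseq elts \<phi> M Mb t 0")
    case True
    have "s \<in> elts (Mseq elts \<phi> M Mb t s 0 v)"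
      using True mkset_elts[OF univ, of "{s}" "M v"] by simp
    then show ?thesis by (intro disjI2 r_into_trancl) simp
  next
    case False then show ?thesis by (simp del: Vseq.simps)
  qed
next
  case (Suc n)
  let ?R = "{(x, y). x \<in> elts y}"
  let ?N = "Mseq elts \<phi> M Mb t s n"
  let ?S = "Mseq elts \<phi> M Mb t s (Suc n)"
  have sub: "elts (?N v) \<subseteq> elts (?S v)" by (rule mono_step[OF univ])
  show ?case
  proof (cases "v \<in> Vseq elts \<phi> M Mb t (Suc n)")
    case False then show ?thesis using Suc[of v] by (simp del: Vseq.simps)
  next
    case vin: True
    have E: "elts (?S v) = elts (?N v) \<union> {?N u | u. u \<in> Vseq elts \<phi> M Mb t n \<and> M u \<in> elts (M v)}"
      using Mseq_Suc_elts[OF univ, of \<phi> M Mb t s n v] by (simp only: vin if_True)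
    show ?thesis
    proof (cases "?N v = M v")
      case False
      with Suc[of v] have "(s, ?N v) \<in> ?R\<^sup>+" by simp
      then obtain z where "(s, z) \<in> ?R\<^sup>*" "z \<in> elts (?N v)"
        by (metis (no_types, lifting) case_prodD mem_Collect_eq tranclD2)
      then have "(s, ?S v) \<in> ?R\<^sup>+" using sub
        by (metis (no_types, lifting) case_prodI mem_Collect_eq rtrancl_into_trancl1 subsetD)
      then show ?thesis by simp
    next
      case Nv: True
      show ?thesis
      proof (cases "\<exists>u. u \<in> Vseq elts \<phi> M Mb t n \<and> M u \<in> elts (M v) \<and> ?N u \<noteq> M u")
        case True
        then obtain u where u: "u \<in> Vseq elts \<phi> M Mb t n" "M u \<in> elts (M v)" "?N u \<noteq> M u" by blast
        with Suc[of u] have "(s, ?N u) \<in> ?R\<^sup>+" by simp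
        moreover have "?N u \<in> elts (?S v)" unfolding E using u by blast
        ultimately have "(s, ?S v) \<in> ?R\<^sup>+"
          by (metis (no_types, lifting) case_prodI mem_Collect_eq trancl_into_trancl)
        then show ?thesis by simp
      next
        case False
        then have "elts (?S v) = elts (M v)" unfolding E using Nv by auto
        then have "?S v = M v" using univ unfolding set_universe_def by (simp add: inj_eq)
        then show ?thesis by simp
      qed
    qed
  qed
qed

lemma key:
  assumes univ: "set_universe elts"
    and s_rank: "\<forall>v\<in>Vars \<phi>. rk_lt elts (M v) s"
    and a: "a \<in> Vars \<phi>" and b: "b \<in> Vars \<phi>"
    and ta: "t \<in> elts (Mb a)" and tb: "t \<notin> elts (Mb b)"
  shows "Mseq elts \<phi> M Mb t s n a \<noteq> Mseq elts \<phi> M Mb t s n b"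
proof -
  let ?R = "{(x, y). x \<in> elts y}"
  have w: "wf ?R" using univ unfolding set_universe_def by blast
  have nots: "\<not> (s, s) \<in> ?R\<^sup>+" using wf_trancl[OF w] by (meson wf_not_refl)
  have Mne: "M u \<noteq> s" "s \<notin> elts (M u)" if "u \<in> Vars \<phi>" for u
    using s_rank that rk_le_refl[OF w] rk_le_mem[OF w] unfolding rk_lt_def by blast+
  have Nne: "Mseq elts \<phi> M Mb t s k u \<noteq> s" if "u \<in> Vars \<phi>" for u k
    using invariant[OF univ, of \<phi> M Mb t s k u] Mne[OF that] nots by auto
  have "s \<in> elts (Mseq elts \<phi> M Mb t s 0 a)"
    using a ta mkset_elts[OF univ, of "{s}" "M a"] by simp
  then have sa: "s \<in> elts (Mseq elts \<phi> M Mb t s n a)"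
    using mono_le[OF univ, of \<phi> M Mb t s 0 a n] by auto
  have sb: "s \<notin> elts (Mseq elts \<phi> M Mb t s k b)" for k
  proof (induction k)
    case 0 then show ?case using tb Mne(2)[OF b] by simp
  next
    case (Suc k)
    have A: "\<forall>u\<in>Vseq elts \<phi> M Mb t k. Mseq elts \<phi> M Mb t s k u \<noteq> s"
      using Nne Vseq_sub[of elts \<phi> M Mb t k] by blast
    show ?case using Suc A Mseq_Suc_elts[OF univ, of \<phi> M Mb t s k b]
      by (auto simp del: Mseq.simps Vseq.simps split: if_splits)
  qed
  show ?thesis using sa sb[of n] by auto
qed

theorem lemma11:
  fixes elts :: "'v \<Rightarrow> 'v set"
    and \<phi> :: "'x literal list"
    and M Mb :: "'x \<Rightarrow> 'v"
    and xb yb :: 'x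
    and t s :: 'v
  assumes univ: "set_universe elts"
    and M_sat: "satisfies elts M \<phi>"
    and Mb_sat: "satisfies elts Mb \<phi>"
    and xb: "xb \<in> Vars \<phi>" and yb: "yb \<in> Vars \<phi>"
    and Mb_ne: "Mb xb \<noteq> Mb yb"
    and t_one: "(t \<in> elts (Mb xb)) \<noteq> (t \<in> elts (Mb yb))"
    and s_rank: "\<forall>v\<in>Vars \<phi>. rk_lt elts (M v) s"
  shows "Mseq elts \<phi> M Mb t s (card (Vars \<phi>)) xb \<noteq> Mseq elts \<phi> M Mb t s (card (Vars \<phi>)) yb"
proof (cases "t \<in> elts (Mb xb)")
  case True
  then show ?thesis using key[OF univ s_rank xb yb] t_one by auto
next
  case False
  then show ?thesis using key[OF univ s_rank yb xb] t_one by metis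
qed

end
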